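(* Let $G$ be a topological group, $m\in\mathbb N\cup\{\infty\}$, $\rho\colon G\to\mathrm{Isom}(\mathbf H^m_{\mathbb C})_o$ a representation and $x\in\mathbf H^m_{\mathbb C}$. Let $\alpha(g_1,g_2,g_3)=\mathrm{Cart}(\rho(g_1)x,\rho(g_2)x,\rho(g_3)x)$. If $\rho(G)$ fixes a point $y\in\partial\mathbf H^m_{\mathbb C}$, then there exists an alternating $G$-invariant $1$-cochain $\omega\colon G^2\to\mathbb R$ such that $\partial\omega=\alpha$.
   Context: $\mathbf H^m_{\mathbb C}$ is the projectivization of the positive vectors of a separable complex Hilbert space with a strongly non-degenerate Hermitian form $B$ of signature $(1,m)$ (linear in the first variable), with $\cosh d([v],[w])=|B(v,w)|/\sqrt{B(v,v)B(w,w)}$; its boundary is the set of isotropic lines; $\mathrm{Isom}(\mathbf H^m_{\mathbb C})_o=PU(1,m)$. A representation is an orbitally continuous homomorphism. The Cartan argument is $\mathrm{Cart}(x,y,z)=\arg\big(B(\tilde x,\tilde y)B(\tilde y,\tilde z)B(\tilde z,\tilde x)\big)$ for any lifts (defined also when some points are on the boundary, using isotropic lifts). A $1$-cochain $\omega$ is alternating if $\omega(l,g)=-\omega(g,l)$ and $G$-invariant if $\omega(hg,hl)=\omega(g,l)$; $\partial\omega(g,l,k)=\omega(l,k)-\omega(g,k)+\omega(g,l)$. *)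

theory Defs
  imports "HOL-Analysis.Analysis" "HOL-Library.Extended_Nat"
begin

text \<open>Standard model of a separable complex Hilbert space of dimension m+1
  (m :: enat, infinity allowed): square-summable sequences supported on indices 0..m,
  with the Hermitian form of signature (1,m), linear in the first variable.\<close>

type_synonym cvec = "nat \<Rightarrow> complex"

definition vecs :: "enat \<Rightarrow> cvec set" where
  "vecs m = {v. (\<forall>i. enat i > m \<longrightarrow> v i = 0) \<and> summable (\<lambda>i. (cmod (v i))\<^sup>2)}"

definition l2norm :: "cvec \<Rightarrow> real" where
  "l2norm v = sqrt (\<Sum>i. (cmod (v i))\<^sup>2)"

definition cscale :: "complex \<Rightarrow> cvec \<Rightarrow> cvec" where
  "cscale c v = (\<lambda>i. c * v i)"

definition cadd :: "cvec \<Rightarrow> cvec \<Rightarrow> cvec" where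
  "cadd v w = (\<lambda>i. v i + w i)"

definition B :: "cvec \<Rightarrow> cvec \<Rightarrow> complex" where
  "B v w = v 0 * cnj (w 0) - (\<Sum>i. v (Suc i) * cnj (w (Suc i)))"

text \<open>Complex lines (points of the projectivization), represented as the set of
  nonzero multiples of a vector.\<close>

definition cline :: "cvec \<Rightarrow> cvec set" where
  "cline v = {cscale c v | c. c \<noteq> 0}"

definition hpoints :: "enat \<Rightarrow> cvec set set" where
  "hpoints m = {cline v | v. v \<in> vecs m \<and> Re (B v v) > 0}"

definition hboundary :: "enat \<Rightarrow> cvec set set" where
  "hboundary m = {cline v | v. v \<in> vecs m \<and> v \<noteq> (\<lambda>_. 0) \<and> B v v = 0}"

definition rep :: "cvec set \<Rightarrow> cvec" where
  "rep p = (SOME v. v \<in> p)"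

definition hdist :: "cvec set \<Rightarrow> cvec set \<Rightarrow> real" where
  "hdist p q = arcosh (cmod (B (rep p) (rep q)) /
                        sqrt (Re (B (rep p) (rep p)) * Re (B (rep q) (rep q))))"

definition Cart :: "cvec set \<Rightarrow> cvec set \<Rightarrow> cvec set \<Rightarrow> real" where
  "Cart p q r = Arg (B (rep p) (rep q) * B (rep q) (rep r) * B (rep r) (rep p))"

definition unitary_op :: "enat \<Rightarrow> (cvec \<Rightarrow> cvec) \<Rightarrow> bool" where
  "unitary_op m T \<longleftrightarrow>
     bij_betw T (vecs m) (vecs m) \<and>
     (\<forall>v\<in>vecs m. \<forall>w\<in>vecs m. \<forall>a b.
         T (cadd (cscale a v) (cscale b w)) = cadd (cscale a (T v)) (cscale b (T w))) \<and>
     (\<forall>v\<in>vecs m. \<forall>w\<in>vecs m. B (T v) (T w) = B v w) \<and>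
     (\<exists>K. \<forall>v\<in>vecs m. l2norm (T v) \<le> K * l2norm v)"

text \<open>PU(1,m) = Isom(H^m_C)_o, acting on projective points (lines).\<close>

definition is_PU :: "enat \<Rightarrow> (cvec set \<Rightarrow> cvec set) \<Rightarrow> bool" where
  "is_PU m f \<longleftrightarrow> (\<exists>T. unitary_op m T \<and>
      (\<forall>v\<in>vecs m. v \<noteq> (\<lambda>_. 0) \<longrightarrow> f (cline v) = T ` cline v))"

text \<open>A representation: orbitally continuous homomorphism G \<rightarrow> PU(1,m);
  the topological group G is written additively.\<close>

definition representation ::
  "enat \<Rightarrow> ('g::topological_group_add \<Rightarrow> cvec set \<Rightarrow> cvec set) \<Rightarrow> bool" where
  "representation m \<rho> \<longleftrightarrow>
     (\<forall>g. is_PU m (\<rho> g)) \<and>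
     (\<forall>g h. \<forall>v\<in>vecs m. v \<noteq> (\<lambda>_. 0) \<longrightarrow> \<rho> (g + h) (cline v) = \<rho> g (\<rho> h (cline v))) \<and>
     (\<forall>p\<in>hpoints m. \<forall>g. \<forall>\<epsilon>>0. \<exists>U. open U \<and> g \<in> U \<and>
         (\<forall>h\<in>U. hdist (\<rho> h p) (\<rho> g p) < \<epsilon>))"

definition alternating :: "('g \<Rightarrow> 'g \<Rightarrow> real) \<Rightarrow> bool" where
  "alternating \<omega> \<longleftrightarrow> (\<forall>g l. \<omega> l g = - \<omega> g l)"

definition G_invariant :: "('g::group_add \<Rightarrow> 'g \<Rightarrow> real) \<Rightarrow> bool" where
  "G_invariant \<omega> \<longleftrightarrow> (\<forall>h g l. \<omega> (h + g) (h + l) = \<omega> g l)"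

definition coboundary1 :: "('g \<Rightarrow> 'g \<Rightarrow> real) \<Rightarrow> 'g \<Rightarrow> 'g \<Rightarrow> 'g \<Rightarrow> real" where
  "coboundary1 \<omega> g l k = \<omega> l k - \<omega> g k + \<omega> g l"

end

theory Submission
  imports Defs
begin

definition P :: "cvec \<Rightarrow> cvec \<Rightarrow> complex" where
  "P v w = (\<Sum>i. v (Suc i) * cnj (w (Suc i)))"

lemma cm: "z * cnj z = of_real ((cmod z)\<^sup>2)"
  by (simp add: complex_mult_cnj cmod_power2)

lemma B_P: "B v w = v 0 * cnj (w 0) - P v w"
  by (simp add: B_def P_def)

lemma vecs_summ: "v \<in> vecs m \<Longrightarrow> summable (\<lambda>i. (cmod (v i))\<^sup>2)"
  by (simp add: vecs_def)

lemma vecs_summ_Suc: "v \<in> vecs m \<Longrightarrow> summable (\<lambda>i. (cmod (v (Suc i)))\<^sup>2)"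
  using summable_ignore_initial_segment[OF vecs_summ, of v m 1] by simp

lemma prod_le: "cmod (a * cnj b) \<le> (cmod a)\<^sup>2 + (cmod b)\<^sup>2"
proof -
  have "0 \<le> (cmod a - cmod b)\<^sup>2" by simp
  hence "2 * (cmod a * cmod b) \<le> (cmod a)\<^sup>2 + (cmod b)\<^sup>2"
    by (simp add: power2_diff)
  moreover have "0 \<le> cmod a * cmod b" by simp
  ultimately have "cmod a * cmod b \<le> (cmod a)\<^sup>2 + (cmod b)\<^sup>2" by linarith
  thus ?thesis by (simp add: norm_mult)
qed

lemma summ_prod_Suc:
  assumes "v \<in> vecs m" "w \<in> vecs m"
  shows "summable (\<lambda>i. v (Suc i) * cnj (w (Suc i)))"
proof (rule summable_norm_cancel, rule summable_comparison_test)
  show "\<exists>N. \<forall>n\<ge>N. norm (norm (v (Suc n) * cnj (w (Suc n)))) \<le> (cmod (v (Suc n)))\<^sup>2 + (cmod (w (Suc n)))\<^sup>2"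
    using prod_le by auto
  show "summable (\<lambda>n. (cmod (v (Suc n)))\<^sup>2 + (cmod (w (Suc n)))\<^sup>2)"
    using assms vecs_summ_Suc summable_add by blast
qed

lemma vecs_lin:
  assumes "v \<in> vecs m" "w \<in> vecs m"
  shows "(\<lambda>i. v i + s * w i) \<in> vecs m"
proof -
  have b: "(cmod (v i + s * w i))\<^sup>2 \<le> 2 * (cmod (v i))\<^sup>2 + 2 * (cmod s)\<^sup>2 * (cmod (w i))\<^sup>2" for i
  proof -
    have "cmod (v i + s * w i) \<le> cmod (v i) + cmod s * cmod (w i)"
      by (metis norm_mult norm_triangle_ineq)
    hence "(cmod (v i + s * w i))\<^sup>2 \<le> (cmod (v i) + cmod s * cmod (w i))\<^sup>2"
      by (simp add: power_mono)
    also have "\<dots> \<le> 2 * (cmod (v i))\<^sup>2 + 2 * (cmod s)\<^sup>2 * (cmod (w i))\<^sup>2"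
    proof -
      have "0 \<le> (cmod (v i) - cmod s * cmod (w i))\<^sup>2" by simp
      thus ?thesis by (simp add: power2_diff power2_sum power_mult_distrib)
    qed
    finally show ?thesis .
  qed
  have "summable (\<lambda>i. 2 * (cmod (v i))\<^sup>2 + 2 * (cmod s)\<^sup>2 * (cmod (w i))\<^sup>2)"
    using assms vecs_summ by (intro summable_add summable_mult) auto
  hence "summable (\<lambda>i. (cmod (v i + s * w i))\<^sup>2)"
    by (rule summable_comparison_test[rotated]) (use b in auto)
  thus ?thesis using assms by (auto simp: vecs_def)
qed

lemma vecs_scale: "v \<in> vecs m \<Longrightarrow> cscale c v \<in> vecs m"
  using vecs_lin[of "\<lambda>_. 0" m v c] by (simp add: cscale_def vecs_def)

lemma P_lin_left:
  assumes "v \<in> vecs m" "w \<in> vecs m" "z \<in> vecs m"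
  shows "P (\<lambda>i. v i + s * w i) z = P v z + s * P w z"
proof -
  have s1: "summable (\<lambda>i. v (Suc i) * cnj (z (Suc i)))" by (rule summ_prod_Suc[OF assms(1,3)])
  have s2: "summable (\<lambda>i. s * (w (Suc i) * cnj (z (Suc i))))"
    by (rule summable_mult[OF summ_prod_Suc[OF assms(2,3)]])
  have e: "(\<lambda>i. (v (Suc i) + s * w (Suc i)) * cnj (z (Suc i)))
         = (\<lambda>i. v (Suc i) * cnj (z (Suc i)) + s * (w (Suc i) * cnj (z (Suc i))))"
    by (rule ext) (simp only: distrib_right mult.assoc)
  have "P (\<lambda>i. v i + s * w i) z = (\<Sum>i. v (Suc i) * cnj (z (Suc i)) + s * (w (Suc i) * cnj (z (Suc i))))"
    unfolding P_def e[symmetric] ..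
  also have "\<dots> = P v z + (\<Sum>i. s * (w (Suc i) * cnj (z (Suc i))))"
    unfolding P_def by (rule suminf_add[OF s1 s2, symmetric])
  also have "(\<Sum>i. s * (w (Suc i) * cnj (z (Suc i)))) = s * P w z"
    unfolding P_def by (rule suminf_mult[OF summ_prod_Suc[OF assms(2,3)]])
  finally show ?thesis .
qed

lemma B_lin_left:
  assumes "v \<in> vecs m" "w \<in> vecs m" "z \<in> vecs m"
  shows "B (\<lambda>i. v i + s * w i) z = B v z + s * B w z"
proof -
  have "B (\<lambda>i. v i + s * w i) z = (v 0 + s * w 0) * cnj (z 0) - (P v z + s * P w z)"
    by (simp only: B_P P_lin_left[OF assms])
  also have "\<dots> = B v z + s * B w z"
    unfolding B_P by (simp add: algebra_simps)
  finally show ?thesis .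
qed

lemma P_cnj:
  assumes "v \<in> vecs m" "w \<in> vecs m"
  shows "P w v = cnj (P v w)"
proof -
  have h: "(\<lambda>i. v (Suc i) * cnj (w (Suc i))) sums P v w"
    unfolding P_def using summ_prod_Suc[OF assms] by (rule summable_sums)
  have h2: "(\<lambda>i. cnj (v (Suc i) * cnj (w (Suc i)))) sums cnj (P v w)"
    by (rule sums_cnj[THEN iffD2, OF h])
  have e: "(\<lambda>i. cnj (v (Suc i) * cnj (w (Suc i)))) = (\<lambda>i. w (Suc i) * cnj (v (Suc i)))"
    by (rule ext) (simp add: mult.commute)
  have "(\<lambda>i. w (Suc i) * cnj (v (Suc i))) sums cnj (P v w)" using h2 unfolding e .
  thus ?thesis unfolding P_def by (rule sums_unique[symmetric])
qed

lemma B_cnj: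
  assumes "v \<in> vecs m" "w \<in> vecs m"
  shows "B w v = cnj (B v w)"
  using P_cnj[OF assms] by (simp add: B_P mult.commute)

lemma B_lin_right:
  assumes "v \<in> vecs m" "w \<in> vecs m" "z \<in> vecs m"
  shows "B z (\<lambda>i. v i + s * w i) = B z v + cnj s * B z w"
  using B_lin_left[OF assms, of s] B_cnj[OF vecs_lin[OF assms(1,2)] assms(3)]
    B_cnj[OF assms(1,3)] B_cnj[OF assms(2,3)] by simp

lemma P_self:
  assumes "v \<in> vecs m"
  shows "P v v = of_real (\<Sum>i. (cmod (v (Suc i)))\<^sup>2)"
proof -
  have "P v v = (\<Sum>i. of_real ((cmod (v (Suc i)))\<^sup>2))"
    unfolding P_def cm ..
  also have "\<dots> = of_real (\<Sum>i. (cmod (v (Suc i)))\<^sup>2)"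
    by (rule suminf_of_real[OF vecs_summ_Suc[OF assms], symmetric])
  finally show ?thesis .
qed

lemma B_self:
  assumes "v \<in> vecs m"
  shows "B v v = of_real ((cmod (v 0))\<^sup>2 - (\<Sum>i. (cmod (v (Suc i)))\<^sup>2))"
  using P_self[OF assms] by (simp add: B_P cm)

lemma B_scale:
  assumes "v \<in> vecs m" "w \<in> vecs m"
  shows "B (cscale c v) (cscale d w) = c * cnj d * B v w"
proof -
  have "P (cscale c v) (cscale d w) = (\<Sum>i. (c * cnj d) * (v (Suc i) * cnj (w (Suc i))))"
    unfolding P_def cscale_def by (simp add: algebra_simps)
  also have "\<dots> = c * cnj d * P v w"
    unfolding P_def by (rule suminf_mult[OF summ_prod_Suc[OF assms]])
  finally show ?thesis by (simp add: B_P cscale_def algebra_simps)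
qed

lemma P_lin_right:
  assumes "v \<in> vecs m" "w \<in> vecs m" "z \<in> vecs m"
  shows "P z (\<lambda>i. v i + s * w i) = P z v + cnj s * P z w"
  using P_lin_left[OF assms, of s] P_cnj[OF vecs_lin[OF assms(1,2)] assms(3)]
    P_cnj[OF assms(1,3)] P_cnj[OF assms(2,3)] by simp

lemma B_real: "v \<in> vecs m \<Longrightarrow> B v v = of_real (Re (B v v))"
  using B_self by (metis Re_complex_of_real)

lemma P_real: "v \<in> vecs m \<Longrightarrow> P v v = of_real (Re (P v v))"
  using P_self by (metis Re_complex_of_real)

lemma P_nonneg: "v \<in> vecs m \<Longrightarrow> 0 \<le> Re (P v v)"
  using P_self by (simp add: suminf_nonneg vecs_summ_Suc)

lemma CS_real:
  fixes p r Q :: real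
  assumes "r \<ge> 0" "Q \<ge> 0" "\<And>l. 0 \<le> p - 2 * l * Q + l\<^sup>2 * Q * r"
  shows "Q \<le> p * r"
proof (cases "r > 0")
  case True
  have "0 \<le> p - 2 * (1/r) * Q + (1/r)\<^sup>2 * Q * r" by (rule assms(3))
  also have "\<dots> = p - Q / r" using True by (simp add: power2_eq_square field_simps)
  finally have "Q / r \<le> p" by simp
  thus ?thesis using True by (simp add: field_simps)
next
  case False
  hence r0: "r = 0" using assms(1) by simp
  show ?thesis
  proof (rule ccontr)
    assume "\<not> Q \<le> p * r"
    hence Qp: "Q > 0" using r0 by simp
    define q where "q = \<bar>p\<bar>"
    have q1: "p \<le> q" and q2: "0 \<le> q" by (simp_all add: q_def)
    have "0 \<le> p - 2 * ((q + 1) / Q) * Q" using assms(3)[of "(q + 1) / Q"] r0 by simp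
    moreover have "((q + 1) / Q) * Q = q + 1" using Qp by simp
    ultimately have "0 \<le> p - 2 * (q + 1)" by (metis mult.assoc)
    thus False using q1 q2 by (simp add: algebra_simps)
  qed
qed

lemma CS_gen:
  fixes p r :: real and q :: complex
  assumes "r \<ge> 0" "\<And>t. 0 \<le> p + 2 * Re (cnj t * q) + (cmod t)\<^sup>2 * r"
  shows "(cmod q)\<^sup>2 \<le> p * r"
proof (rule CS_real[OF assms(1)])
  show "0 \<le> (cmod q)\<^sup>2" by simp
  fix l :: real
  have "0 \<le> p + 2 * Re (cnj (- of_real l * q) * q) + (cmod (- of_real l * q))\<^sup>2 * r"
    by (rule assms(2))
  also have "Re (cnj (- of_real l * q) * q) = - l * (cmod q)\<^sup>2"
  proof -
    have "cnj (- of_real l * q) * q = - of_real l * (q * cnj q)" by simp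
    thus ?thesis by (simp only: cm) simp
  qed
  also have "(cmod (- of_real l * q))\<^sup>2 = l\<^sup>2 * (cmod q)\<^sup>2"
    by (simp add: norm_mult power_mult_distrib)
  finally show "0 \<le> p - 2 * l * (cmod q)\<^sup>2 + l\<^sup>2 * (cmod q)\<^sup>2 * r" by (simp add: algebra_simps)
qed


lemma P_CS:
  assumes v: "v \<in> vecs m" and w: "w \<in> vecs m"
  shows "(cmod (P w v))\<^sup>2 \<le> Re (P w w) * Re (P v v)"
proof (rule CS_gen[OF P_nonneg[OF v]])
  fix t
  define u where "u = (\<lambda>i. w i + t * v i)"
  have m: "u \<in> vecs m" unfolding u_def by (rule vecs_lin[OF w v])
  have "P u u = P w u + t * P v u" unfolding u_def by (rule P_lin_left[OF w v m[unfolded u_def]])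
  also have "P w u = P w w + cnj t * P w v" unfolding u_def by (rule P_lin_right[OF w v w])
  also have "P v u = P v w + cnj t * P v v" unfolding u_def by (rule P_lin_right[OF w v v])
  finally have e1: "P u u = P w w + cnj t * P w v + t * (P v w + cnj t * P v v)" .
  have e2: "P v w = cnj (P w v)" by (rule P_cnj[OF w v])
  have e3: "P v v = of_real (Re (P v v))" by (rule P_real[OF v])
  have "Re (P u u) = Re (P w w) + 2 * Re (cnj t * P w v) + (cmod t)\<^sup>2 * Re (P v v)"
  proof -
    have ct: "(cmod t)\<^sup>2 = Re t * Re t + Im t * Im t" using cmod_power2[of t] by (simp add: power2_eq_square)
    show ?thesis
      apply (subst e1, subst e2, subst e3)
      by (simp add: ct algebra_simps)
  qed
  thus "0 \<le> Re (P w w) + 2 * Re (cnj t * P w v) + (cmod t)\<^sup>2 * Re (P v v)"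
    using P_nonneg[OF m] by simp
qed

lemma neg_perp:
  assumes v: "v \<in> vecs m" and vp: "Re (B v v) > 0" and w: "w \<in> vecs m" and o: "B w v = 0"
  shows "Re (B w w) \<le> 0" and "w \<noteq> (\<lambda>_. 0) \<Longrightarrow> Re (B w w) < 0"
proof -
  define A where "A = Re (P v v)"
  define W where "W = Re (P w w)"
  define X where "X = (cmod (w 0))\<^sup>2"
  define V where "V = (cmod (v 0))\<^sup>2"
  have A0: "A \<ge> 0" and W0: "W \<ge> 0" using P_nonneg v w by (auto simp: A_def W_def)
  have BP: "\<And>u. u \<in> vecs m \<Longrightarrow> Re (B u u) = (cmod (u 0))\<^sup>2 - Re (P u u)"
    by (simp add: B_P cm)
  have AV: "A < V" using vp BP[OF v] by (simp add: A_def V_def)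
  have "w 0 * cnj (v 0) = P w v" using o by (simp add: B_P)
  hence "X * V = (cmod (P w v))\<^sup>2"
    by (metis X_def V_def complex_mod_cnj norm_mult power_mult_distrib)
  also have "\<dots> \<le> W * A" using P_CS[OF v w] by (simp add: W_def A_def)
  finally have XV: "X * V \<le> W * A" .
  have X0: "X \<ge> 0" by (simp add: X_def)
  have BW: "Re (B w w) = X - W" using BP[OF w] by (simp add: X_def W_def)
  have main: "W > 0 \<Longrightarrow> X < W"
  proof -
    assume Wp: "W > 0"
    have "W * A < W * V" using Wp AV by simp
    show "X < W"
    proof (rule ccontr)
      assume "\<not> X < W"
      hence "W * V \<le> X * V" using AV A0 by (intro mult_right_mono) auto
      thus False using XV \<open>W * A < W * V\<close> by linarith
    qed
  qed
  have Wz: "W = 0 \<Longrightarrow> X = 0"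
  proof -
    assume "W = 0"
    hence "X * V \<le> 0" using XV by simp
    moreover have "V > 0" using AV A0 by simp
    ultimately show "X = 0" using X0 by (simp add: mult_le_0_iff)
  qed
  show "Re (B w w) \<le> 0"
    using main Wz W0 BW by force
  assume nz: "w \<noteq> (\<lambda>_. 0)"
  have "W > 0"
  proof (rule ccontr)
    assume "\<not> W > 0"
    hence W00: "W = 0" using W0 by simp
    hence "w 0 = 0" using Wz by (simp add: X_def)
    moreover have "\<forall>i. (cmod (w (Suc i)))\<^sup>2 = 0"
    proof -
      have "(\<Sum>i. (cmod (w (Suc i)))\<^sup>2) = 0" using W00 P_self[OF w] by (simp add: W_def)
      thus ?thesis using suminf_eq_zero_iff[OF vecs_summ_Suc[OF w]] by simp
    qed
    ultimately have "\<forall>i. w i = 0" by (metis not0_implies_Suc norm_eq_zero zero_eq_power2)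
    thus False using nz by auto
  qed
  thus "Re (B w w) < 0" using main BW by simp
qed

lemma alg:
  fixes a c e :: real and x y z :: complex
  assumes a: "a > 0" and c: "c > 0" and e: "e \<ge> 0" and y: "y \<noteq> 0"
    and M22: "c - (cmod x)\<^sup>2 / a \<le> 0"
    and CS: "(cmod (z - cnj x * y / of_real a))\<^sup>2 \<le> (c - (cmod x)\<^sup>2 / a) * (e - (cmod y)\<^sup>2 / a)"
  shows "Re (x * z * cnj y) > 0"
proof -
  define R where "R = Re (x * z * cnj y)"
  define X where "X = (cmod x)\<^sup>2"
  define Y where "Y = (cmod y)\<^sup>2"
  define Z where "Z = (cmod z)\<^sup>2"
  have id: "(cmod (z - cnj x * y / of_real a))\<^sup>2 = Z - 2 * R / a + X * Y / a\<^sup>2"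
  proof -
    have "(cmod (z - cnj x * y / of_real a))\<^sup>2 = (Re z - Re (cnj x * y) / a)\<^sup>2 + (Im z - Im (cnj x * y) / a)\<^sup>2"
      by (simp add: cmod_power2 Re_divide_of_real Im_divide_of_real)
    also have "\<dots> = Z - 2 * R / a + X * Y / a\<^sup>2"
      unfolding R_def X_def Y_def Z_def cmod_power2 using a by (simp add: field_simps power2_eq_square)
    finally show ?thesis .
  qed
  have Yp: "Y > 0" using y by (simp add: Y_def)
  have Xac: "X \<ge> a * c" using M22 a by (simp add: X_def field_simps)
  have "Z - 2 * R / a + X * Y / a\<^sup>2 \<le> c * e - c * Y / a - e * X / a + X * Y / a\<^sup>2"
    using CS id a by (simp add: X_def Y_def algebra_simps power2_eq_square)
  hence "2 * R / a \<ge> Z + c * Y / a + e * X / a - c * e" by simp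
  moreover have "e * X / a \<ge> c * e"
  proof -
    have "e * X \<ge> e * (a * c)" using Xac e by (simp add: mult_left_mono)
    thus ?thesis using a by (simp add: field_simps)
  qed
  moreover have "c * Y / a > 0" using c Yp a by simp
  moreover have "Z \<ge> 0" by (simp add: Z_def)
  ultimately have "2 * R / a > 0" by linarith
  thus ?thesis using a by (simp add: R_def zero_less_divide_iff)
qed



lemma triple:
  assumes v1: "v1 \<in> vecs m" and v2: "v2 \<in> vecs m" and v3: "v3 \<in> vecs m"
    and p1: "Re (B v1 v1) > 0" and p2: "Re (B v2 v2) > 0" and p3: "Re (B v3 v3) \<ge> 0"
    and nz: "v3 \<noteq> (\<lambda>_. 0)"
  shows "Re (B v1 v2 * B v2 v3 * B v3 v1) > 0"
proof -
  define a where "a = Re (B v1 v1)"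
  define c where "c = Re (B v2 v2)"
  define e where "e = Re (B v3 v3)"
  define x where "x = B v1 v2"
  define y where "y = B v1 v3"
  define z where "z = B v2 v3"
  have a0: "a > 0" using p1 a_def by simp
  have B11: "B v1 v1 = of_real a" using B_real[OF v1] a_def by simp
  have B22: "B v2 v2 = of_real c" using B_real[OF v2] c_def by simp
  have B33: "B v3 v3 = of_real e" using B_real[OF v3] e_def by simp
  have B21: "B v2 v1 = cnj x" using B_cnj[OF v1 v2] x_def by simp
  have B31: "B v3 v1 = cnj y" using B_cnj[OF v1 v3] y_def by simp
  define s2 where "s2 = - (cnj x / of_real a)"
  define s3 where "s3 = - (cnj y / of_real a)"
  define w2 where "w2 = (\<lambda>i. v2 i + s2 * v1 i)"
  define w3 where "w3 = (\<lambda>i. v3 i + s3 * v1 i)"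
  have w2v: "w2 \<in> vecs m" unfolding w2_def by (rule vecs_lin[OF v2 v1])
  have w3v: "w3 \<in> vecs m" unfolding w3_def by (rule vecs_lin[OF v3 v1])
  have o2: "B w2 v1 = 0"
    unfolding w2_def using B_lin_left[OF v2 v1 v1, of s2] a0 by (simp add: B21 B11 s2_def)
  have o3: "B w3 v1 = 0"
    unfolding w3_def using B_lin_left[OF v3 v1 v1, of s3] a0 by (simp add: B31 B11 s3_def)
  have L2: "B w2 u = B v2 u + s2 * B v1 u" if "u \<in> vecs m" for u
    unfolding w2_def by (rule B_lin_left[OF v2 v1 that])
  have L3: "B w3 u = B v3 u + s3 * B v1 u" if "u \<in> vecs m" for u
    unfolding w3_def by (rule B_lin_left[OF v3 v1 that])
  have R2: "B u w2 = B u v2 + cnj s2 * B u v1" if "u \<in> vecs m" for u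
    unfolding w2_def by (rule B_lin_right[OF v2 v1 that])
  have R3: "B u w3 = B u v3 + cnj s3 * B u v1" if "u \<in> vecs m" for u
    unfolding w3_def by (rule B_lin_right[OF v3 v1 that])
  have xx: "cnj x * x = of_real ((cmod x)\<^sup>2)" using cm[of x] by (simp add: mult.commute)
  have yy: "cnj y * y = of_real ((cmod y)\<^sup>2)" using cm[of y] by (simp add: mult.commute)
  have W22: "B w2 w2 = of_real (c - (cmod x)\<^sup>2 / a)"
  proof -
    have "B w2 w2 = B w2 v2" using R2[OF w2v] o2 by simp
    also have "\<dots> = of_real c - cnj x * x / of_real a" using L2[OF v2] by (simp add: B22 x_def s2_def)
    finally show ?thesis by (simp add: xx)
  qed
  have W33: "B w3 w3 = of_real (e - (cmod y)\<^sup>2 / a)"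
  proof -
    have "B w3 w3 = B w3 v3" using R3[OF w3v] o3 by simp
    also have "\<dots> = of_real e - cnj y * y / of_real a" using L3[OF v3] by (simp add: B33 y_def s3_def)
    finally show ?thesis by (simp add: yy)
  qed
  have W23: "B w2 w3 = z - cnj x * y / of_real a"
  proof -
    have "B w2 w3 = B w2 v3" using R3[OF w2v] o2 by simp
    also have "\<dots> = z - cnj x * y / of_real a" using L2[OF v3] by (simp add: y_def z_def s2_def)
    finally show ?thesis .
  qed
  have M22: "c - (cmod x)\<^sup>2 / a \<le> 0" using neg_perp(1)[OF v1 p1 w2v o2] W22 by simp
  have M33: "e - (cmod y)\<^sup>2 / a \<le> 0" using neg_perp(1)[OF v1 p1 w3v o3] W33 by simp
  have y0: "y \<noteq> 0"
  proof
    assume "y = 0"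
    hence "B v3 v1 = 0" using B31 by simp
    hence "Re (B v3 v3) < 0" using neg_perp(2)[OF v1 p1 v3 _ nz] by simp
    thus False using p3 by simp
  qed
  define q where "q = B w2 w3"
  define r2 where "r2 = c - (cmod x)\<^sup>2 / a"
  define r3 where "r3 = e - (cmod y)\<^sup>2 / a"
  have CS: "(cmod (- q))\<^sup>2 \<le> (- r2) * (- r3)"
  proof (rule CS_gen)
    show "0 \<le> - r3" using M33 r3_def by simp
    fix t
    define u where "u = (\<lambda>i. w2 i + t * w3 i)"
    have uv: "u \<in> vecs m" unfolding u_def by (rule vecs_lin[OF w2v w3v])
    have ou: "B u v1 = 0" unfolding u_def using B_lin_left[OF w2v w3v v1, of t] o2 o3 by simp
    have "B u u = B w2 u + t * B w3 u" unfolding u_def by (rule B_lin_left[OF w2v w3v uv[unfolded u_def]])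
    also have "B w2 u = B w2 w2 + cnj t * B w2 w3" unfolding u_def by (rule B_lin_right[OF w2v w3v w2v])
    also have "B w3 u = B w3 w2 + cnj t * B w3 w3" unfolding u_def by (rule B_lin_right[OF w2v w3v w3v])
    also have "B w3 w2 = cnj q" unfolding q_def by (rule B_cnj[OF w2v w3v])
    finally have e1: "B u u = of_real r2 + cnj t * q + t * (cnj q + cnj t * of_real r3)"
      using W22 W33 by (simp add: q_def r2_def r3_def)
    have ct: "(cmod t)\<^sup>2 = Re t * Re t + Im t * Im t" using cmod_power2[of t] by (simp add: power2_eq_square)
    have "Re (B u u) = r2 + 2 * Re (cnj t * q) + (cmod t)\<^sup>2 * r3"
      by (subst e1) (simp add: ct algebra_simps)
    moreover have "Re (B u u) \<le> 0" by (rule neg_perp(1)[OF v1 p1 uv ou])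
    ultimately show "0 \<le> - r2 + 2 * Re (cnj t * - q) + (cmod t)\<^sup>2 * - r3" by simp
  qed
  have "Re (x * z * cnj y) > 0"
  proof (rule alg[OF a0 _ _ y0 M22])
    show "c > 0" using p2 c_def by simp
    show "e \<ge> 0" using p3 e_def by simp
    show "(cmod (z - cnj x * y / complex_of_real a))\<^sup>2 \<le> (c - (cmod x)\<^sup>2 / a) * (e - (cmod y)\<^sup>2 / a)"
    proof -
      have "(cmod (- q))\<^sup>2 = (cmod (z - cnj x * y / complex_of_real a))\<^sup>2"
        by (simp only: norm_minus_cancel q_def W23)
      moreover have "(- r2) * (- r3) = (c - (cmod x)\<^sup>2 / a) * (e - (cmod y)\<^sup>2 / a)"
        unfolding r2_def r3_def by (rule minus_mult_minus)
      ultimately show ?thesis using CS by simp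
    qed
  qed
  thus ?thesis by (simp add: x_def z_def B31)
qed


lemma arg_half: "Re z > 0 \<Longrightarrow> \<bar>Arg z\<bar> < pi / 2"
  using Arg_Re_pos by blast

lemma arg3:
  assumes "Re z1 > 0" "Re z2 > 0" "Re z3 > 0" "Re (z1 * z2 * z3) > 0"
  shows "Arg (z1 * z2 * z3) = Arg z1 + Arg z2 + Arg z3"
proof -
  have h1: "\<bar>Arg z1\<bar> < pi / 2" and h2: "\<bar>Arg z2\<bar> < pi / 2" and h3: "\<bar>Arg z3\<bar> < pi / 2"
    and h4: "\<bar>Arg (z1 * z2 * z3)\<bar> < pi / 2"
    using assms arg_half by auto
  have nz: "z1 \<noteq> 0" "z2 \<noteq> 0" "z3 \<noteq> 0" using assms by auto
  have u1: "Arg z1 < pi / 2" and u2: "Arg z2 < pi / 2" and u3: "Arg z3 < pi / 2"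
    using h1 h2 h3 by (simp_all add: abs_less_iff)
  have l1: "- (pi / 2) < Arg z1" and l2: "- (pi / 2) < Arg z2" and l3: "- (pi / 2) < Arg z3"
    using h1 h2 h3 by (simp_all add: abs_less_iff)
  have u4: "Arg (z1 * z2 * z3) < pi / 2" and l4: "- (pi / 2) < Arg (z1 * z2 * z3)"
    using h4 by (simp_all add: abs_less_iff)
  have "Arg (z1 * z2) = Arg z1 + Arg z2"
    using h1 h2 nz by (intro Arg_times) auto
  moreover have "z1 * z2 \<noteq> 0" using nz by simp
  ultimately have e: "Arg (z1 * z2 * z3) = (Arg z1 + Arg z2 + Arg z3) +
      (if Arg z1 + Arg z2 + Arg z3 \<in> {-pi<..pi} then 0
       else if Arg z1 + Arg z2 + Arg z3 > pi then -2*pi else 2*pi)"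
    using Arg_times'[of "z1 * z2" z3] nz by simp
  show ?thesis
  proof (cases "Arg z1 + Arg z2 + Arg z3 \<in> {-pi<..pi}")
    case True thus ?thesis using e by simp
  next
    case False
    show ?thesis
    proof (cases "Arg z1 + Arg z2 + Arg z3 > pi")
      case True
      hence "Arg (z1 * z2 * z3) = Arg z1 + Arg z2 + Arg z3 - 2 * pi" using e False by simp
      thus ?thesis using u1 u2 u3 u4 l1 l2 l3 l4 by linarith
    next
      case False2: False
      hence "Arg (z1 * z2 * z3) = Arg z1 + Arg z2 + Arg z3 + 2 * pi" using e False by simp
      thus ?thesis using u1 u2 u3 u4 l1 l2 l3 l4 by linarith
    qed
  qed
qed

lemma arg_cnj_pos: "Re z > 0 \<Longrightarrow> Arg (cnj z) = - Arg z"
  by (simp add: Arg_cnj Arg_real)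

lemma timelike_nz: "Re (B v v) > 0 \<Longrightarrow> v \<noteq> (\<lambda>_. 0)"
  by (auto simp: B_P P_def)

lemma triple':
  assumes "v1 \<in> vecs m" "v2 \<in> vecs m" "v3 \<in> vecs m"
    "Re (B v1 v1) > 0" "Re (B v2 v2) > 0" "Re (B v3 v3) \<ge> 0" "v3 \<noteq> (\<lambda>_. 0)"
  shows "Re (B v1 v2 * B v2 v3 * B v3 v1) > 0"
  by (rule triple[OF assms])

lemma alt_vec:
  assumes a: "pa \<in> vecs m" and b: "pb \<in> vecs m" and y: "Y \<in> vecs m"
    and ta: "Re (B pa pa) > 0" and tb: "Re (B pb pb) > 0" and ty: "Re (B Y Y) \<ge> 0" and yn: "Y \<noteq> (\<lambda>_. 0)"
  shows "Arg (B pb pa * B pa Y * B Y pb) = - Arg (B pa pb * B pb Y * B Y pa)"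
proof -
  have e: "B pb pa * B pa Y * B Y pb = cnj (B pa pb * B pb Y * B Y pa)"
    using B_cnj[OF a b] B_cnj[OF b y] B_cnj[OF y a] by simp
  show ?thesis unfolding e by (rule arg_cnj_pos[OF triple[OF a b y ta tb ty yn]])
qed

lemma cocycle_vec:
  assumes a: "pa \<in> vecs m" and b: "pb \<in> vecs m" and c: "pc \<in> vecs m" and y: "Y \<in> vecs m"
    and ta: "Re (B pa pa) > 0" and tb: "Re (B pb pb) > 0" and tc: "Re (B pc pc) > 0"
    and ty: "Re (B Y Y) \<ge> 0" and yn: "Y \<noteq> (\<lambda>_. 0)"
  shows "Arg (B pb pc * B pc Y * B Y pb) - Arg (B pa pc * B pc Y * B Y pa) + Arg (B pa pb * B pb Y * B Y pa)
         = Arg (B pa pb * B pb pc * B pc pa)"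
proof -
  define X1 where "X1 = B pb pc * B pc Y * B Y pb"
  define X2 where "X2 = B pa pc * B pc Y * B Y pa"
  define X3 where "X3 = B pa pb * B pb Y * B Y pa"
  define PP where "PP = B pa pb * B pb pc * B pc pa"
  have r1: "Re X1 > 0" unfolding X1_def by (rule triple[OF b c y tb tc ty yn])
  have r2: "Re X2 > 0" unfolding X2_def by (rule triple[OF a c y ta tc ty yn])
  have r3: "Re X3 > 0" unfolding X3_def by (rule triple[OF a b y ta tb ty yn])
  have rP: "Re PP > 0" unfolding PP_def
    by (rule triple[OF a b c ta tb _ timelike_nz[OF tc]]) (use tc in simp)
  have r2': "Re (cnj X2) > 0" using r2 by simp
  have cX2: "cnj X2 = B pc pa * B Y pc * B pa Y"
    unfolding X2_def using B_cnj[OF a c] B_cnj[OF c y] B_cnj[OF y a] by simp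
  have nz: "B pc Y \<noteq> 0" "B Y pb \<noteq> 0" "B Y pa \<noteq> 0"
    using r1 r3 unfolding X1_def X3_def by auto
  define r where "r = (cmod (B pc Y))\<^sup>2 * (cmod (B Y pb))\<^sup>2 * (cmod (B Y pa))\<^sup>2"
  have rpos: "r > 0" unfolding r_def using nz by simp
  have e1: "B pc Y * B Y pc = of_real ((cmod (B pc Y))\<^sup>2)"
    using cm[of "B pc Y"] B_cnj[OF c y] by simp
  have e2: "B Y pb * B pb Y = of_real ((cmod (B Y pb))\<^sup>2)"
    using cm[of "B Y pb"] B_cnj[OF y b] by simp
  have e3: "B Y pa * B pa Y = of_real ((cmod (B Y pa))\<^sup>2)"
    using cm[of "B Y pa"] B_cnj[OF y a] by simp
  have prod: "X1 * cnj X2 * X3 = PP * of_real r"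
  proof -
    have "X1 * cnj X2 * X3 = PP * ((B pc Y * B Y pc) * (B Y pb * B pb Y) * (B Y pa * B pa Y))"
      unfolding X1_def X3_def cX2 PP_def by (simp add: algebra_simps)
    also have "\<dots> = PP * of_real r" unfolding e1 e2 e3 r_def by simp
    finally show ?thesis .
  qed
  have rprod: "Re (X1 * cnj X2 * X3) > 0" using prod rP rpos by simp
  have "Arg (X1 * cnj X2 * X3) = Arg X1 + Arg (cnj X2) + Arg X3"
    by (rule arg3[OF r1 r2' r3 rprod])
  moreover have "Arg (X1 * cnj X2 * X3) = Arg PP" using prod rpos by simp
  moreover have "Arg (cnj X2) = - Arg X2" using arg_cnj_pos r2 by simp
  ultimately show ?thesis unfolding X1_def X2_def X3_def PP_def by simp
qed


lemma cscale_1: "cscale 1 v = v" by (simp add: cscale_def)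

lemma rep_cline: "\<exists>c. c \<noteq> 0 \<and> rep (cline v) = cscale c v"
proof -
  have "v \<in> cline v" unfolding cline_def
    by (rule CollectI, rule exI[of _ 1]) (simp add: cscale_1)
  hence "rep (cline v) \<in> cline v" unfolding rep_def by (rule someI[of "\<lambda>w. w \<in> cline v"])
  hence "\<exists>c. rep (cline v) = cscale c v \<and> c \<noteq> 0" unfolding cline_def by simp
  thus ?thesis by blast
qed

lemma rep_time:
  assumes "u \<in> vecs m" "Re (B u u) > 0"
  shows "rep (cline u) \<in> vecs m \<and> Re (B (rep (cline u)) (rep (cline u))) > 0"
proof -
  obtain c where c: "c \<noteq> 0" "rep (cline u) = cscale c u" using rep_cline by blast
  have "B (cscale c u) (cscale c u) = (c * cnj c) * B u u" using B_scale[OF assms(1) assms(1)] by simp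
  also have "c * cnj c = of_real ((cmod c)\<^sup>2)" by (rule cm)
  finally have "Re (B (cscale c u) (cscale c u)) = (cmod c)\<^sup>2 * Re (B u u)" by simp
  moreover have "(cmod c)\<^sup>2 > 0" using c by simp
  ultimately show ?thesis using c vecs_scale[OF assms(1)] assms(2) by simp
qed

lemma rep_iso:
  assumes "u \<in> vecs m" "u \<noteq> (\<lambda>_. 0)" "B u u = 0"
  shows "rep (cline u) \<in> vecs m \<and> Re (B (rep (cline u)) (rep (cline u))) \<ge> 0 \<and> rep (cline u) \<noteq> (\<lambda>_. 0)"
proof -
  obtain c where c: "c \<noteq> 0" "rep (cline u) = cscale c u" using rep_cline by blast
  have "B (cscale c u) (cscale c u) = 0" using B_scale[OF assms(1) assms(1)] assms(3) by simp
  moreover have "cscale c u \<noteq> (\<lambda>_. 0)"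
  proof
    assume "cscale c u = (\<lambda>_. 0)"
    hence "\<forall>i. c * u i = 0" by (simp add: cscale_def fun_eq_iff)
    hence "\<forall>i. u i = 0" using c by simp
    hence "u = (\<lambda>_. 0)" by (simp add: fun_eq_iff)
    thus False using assms(2) by simp
  qed
  ultimately show ?thesis using c vecs_scale[OF assms(1)] by simp
qed

lemma Cart_cline:
  assumes "u1 \<in> vecs m" "u2 \<in> vecs m" "u3 \<in> vecs m"
  shows "Cart (cline u1) (cline u2) (cline u3) = Arg (B u1 u2 * B u2 u3 * B u3 u1)"
proof -
  obtain c1 where c1: "c1 \<noteq> 0" "rep (cline u1) = cscale c1 u1" using rep_cline by blast
  obtain c2 where c2: "c2 \<noteq> 0" "rep (cline u2) = cscale c2 u2" using rep_cline by blast
  obtain c3 where c3: "c3 \<noteq> 0" "rep (cline u3) = cscale c3 u3" using rep_cline by blast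
  define r where "r = (cmod c1)\<^sup>2 * (cmod c2)\<^sup>2 * (cmod c3)\<^sup>2"
  have rp: "r > 0" unfolding r_def using c1 c2 c3 by simp
  have "Cart (cline u1) (cline u2) (cline u3)
     = Arg ((c1 * cnj c2 * B u1 u2) * (c2 * cnj c3 * B u2 u3) * (c3 * cnj c1 * B u3 u1))"
    unfolding Cart_def c1 c2 c3 using assms by (simp add: B_scale)
  also have "(c1 * cnj c2 * B u1 u2) * (c2 * cnj c3 * B u2 u3) * (c3 * cnj c1 * B u3 u1)
      = ((c1 * cnj c1) * (c2 * cnj c2) * (c3 * cnj c3)) * (B u1 u2 * B u2 u3 * B u3 u1)"
    by (simp add: algebra_simps)
  also have "(c1 * cnj c1) * (c2 * cnj c2) * (c3 * cnj c3) = of_real r"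
    unfolding cm r_def by simp
  finally show ?thesis using rp by simp
qed

lemma unitary_cline:
  assumes T: "unitary_op m T" and v: "v \<in> vecs m"
  shows "T ` cline v = cline (T v)" and "T v \<in> vecs m"
proof -
  have bij: "bij_betw T (vecs m) (vecs m)" using T unfolding unitary_op_def by blast
  have lin: "\<And>a b. T (cadd (cscale a v) (cscale b v)) = cadd (cscale a (T v)) (cscale b (T v))"
    using T v unfolding unitary_op_def by blast
  have sc: "T (cscale c v) = cscale c (T v)" for c
  proof -
    have "cadd (cscale c v) (cscale 0 v) = cscale c v" by (simp add: cadd_def cscale_def)
    moreover have "cadd (cscale c (T v)) (cscale 0 (T v)) = cscale c (T v)" by (simp add: cadd_def cscale_def)
    ultimately show ?thesis using lin[of c 0] by simp
  qed
  have "T ` cline v = {T (cscale c v) | c. c \<noteq> 0}" unfolding cline_def by auto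
  also have "\<dots> = cline (T v)" unfolding cline_def sc ..
  finally show "T ` cline v = cline (T v)" .
  show "T v \<in> vecs m" using bij v bij_betwE by blast
qed

lemma Cart_PU:
  assumes f: "is_PU m f" and u: "u1 \<in> vecs m" "u2 \<in> vecs m" "u3 \<in> vecs m"
    and nz: "u1 \<noteq> (\<lambda>_. 0)" "u2 \<noteq> (\<lambda>_. 0)" "u3 \<noteq> (\<lambda>_. 0)"
  shows "Cart (f (cline u1)) (f (cline u2)) (f (cline u3)) = Cart (cline u1) (cline u2) (cline u3)"
proof -
  obtain T where T: "unitary_op m T" and fT: "\<And>v. v \<in> vecs m \<Longrightarrow> v \<noteq> (\<lambda>_. 0) \<Longrightarrow> f (cline v) = T ` cline v"
    using f unfolding is_PU_def by blast
  have pres: "\<And>v w. v \<in> vecs m \<Longrightarrow> w \<in> vecs m \<Longrightarrow> B (T v) (T w) = B v w"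
    using T unfolding unitary_op_def by blast
  have e1: "f (cline u1) = cline (T u1)" using fT[OF u(1) nz(1)] unitary_cline(1)[OF T u(1)] by simp
  have e2: "f (cline u2) = cline (T u2)" using fT[OF u(2) nz(2)] unitary_cline(1)[OF T u(2)] by simp
  have e3: "f (cline u3) = cline (T u3)" using fT[OF u(3) nz(3)] unitary_cline(1)[OF T u(3)] by simp
  have "Cart (f (cline u1)) (f (cline u2)) (f (cline u3)) = Cart (cline (T u1)) (cline (T u2)) (cline (T u3))"
    unfolding e1 e2 e3 ..
  also have "\<dots> = Arg (B (T u1) (T u2) * B (T u2) (T u3) * B (T u3) (T u1))"
    by (rule Cart_cline[OF unitary_cline(2)[OF T u(1)] unitary_cline(2)[OF T u(2)] unitary_cline(2)[OF T u(3)]])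
  also have "\<dots> = Arg (B u1 u2 * B u2 u3 * B u3 u1)" using pres[OF u(1) u(2)] pres[OF u(2) u(3)] pres[OF u(3) u(1)] by simp
  also have "\<dots> = Cart (cline u1) (cline u2) (cline u3)" using Cart_cline[OF u] by simp
  finally show ?thesis .
qed

theorem mainTheorem6:
  fixes m :: enat and \<rho> :: "'g::topological_group_add \<Rightarrow> cvec set \<Rightarrow> cvec set"
    and x :: "cvec set"
  assumes "representation m \<rho>"
    and "x \<in> hpoints m"
    and "\<exists>y\<in>hboundary m. \<forall>g. \<rho> g y = y"
  shows "\<exists>\<omega> :: 'g \<Rightarrow> 'g \<Rightarrow> real. alternating \<omega> \<and> G_invariant \<omega> \<and>
           coboundary1 \<omega> = (\<lambda>g1 g2 g3. Cart (\<rho> g1 x) (\<rho> g2 x) (\<rho> g3 x))"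
proof -
  have PU: "\<And>g. is_PU m (\<rho> g)" using assms(1) unfolding representation_def by blast
  have hom: "\<And>g h v. v \<in> vecs m \<Longrightarrow> v \<noteq> (\<lambda>_. 0) \<Longrightarrow> \<rho> (g + h) (cline v) = \<rho> g (\<rho> h (cline v))"
    using assms(1) unfolding representation_def by blast
  obtain v where xv: "x = cline v" and v: "v \<in> vecs m" and vt: "Re (B v v) > 0"
    using assms(2) unfolding hpoints_def by blast
  have vnz: "v \<noteq> (\<lambda>_. 0)" by (rule timelike_nz[OF vt])
  obtain y where yb: "y \<in> hboundary m" and yfix: "\<And>g. \<rho> g y = y" using assms(3) by blast
  obtain y0 where yy: "y = cline y0" and y0: "y0 \<in> vecs m" "y0 \<noteq> (\<lambda>_. 0)" "B y0 y0 = 0"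
    using yb unfolding hboundary_def by blast
  have orb: "\<exists>u. \<rho> g x = cline u \<and> u \<in> vecs m \<and> Re (B u u) > 0" for g
  proof -
    obtain T where T: "unitary_op m T" and fT: "\<And>w. w \<in> vecs m \<Longrightarrow> w \<noteq> (\<lambda>_. 0) \<Longrightarrow> \<rho> g (cline w) = T ` cline w"
      using PU[of g] unfolding is_PU_def by blast
    have "\<rho> g x = cline (T v)" using fT[OF v vnz] unitary_cline[OF T v] xv by simp
    moreover have "T v \<in> vecs m" by (rule unitary_cline(2)[OF T v])
    moreover have "B (T v) (T v) = B v v" using T v unfolding unitary_op_def by blast
    ultimately show ?thesis using vt by auto
  qed
  define U where "U g = (SOME u. \<rho> g x = cline u \<and> u \<in> vecs m \<and> Re (B u u) > 0)" for g
  have U: "\<rho> g x = cline (U g) \<and> U g \<in> vecs m \<and> Re (B (U g) (U g)) > 0" for g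
    unfolding U_def by (rule someI_ex[OF orb])
  define p where "p g = rep (\<rho> g x)" for g
  have pv: "p g \<in> vecs m" and pt: "Re (B (p g) (p g)) > 0" for g
    using rep_time[of "U g" m] U[of g] unfolding p_def by auto
  define Y where "Y = rep y"
  have Yv: "Y \<in> vecs m" and Yt: "Re (B Y Y) \<ge> 0" and Ynz: "Y \<noteq> (\<lambda>_. 0)"
    using rep_iso[OF y0] unfolding Y_def yy by auto
  define \<omega> where "\<omega> g l = Cart (\<rho> g x) (\<rho> l x) y" for g l
  have \<omega>: "\<omega> g l = Arg (B (p g) (p l) * B (p l) Y * B Y (p g))" for g l
    unfolding \<omega>_def Cart_def p_def Y_def ..
  have alt: "alternating \<omega>"
    unfolding alternating_def \<omega>
    using alt_vec[OF pv pv Yv pt pt Yt Ynz] by blast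
  have inv: "G_invariant \<omega>"
    unfolding G_invariant_def
  proof (intro allI)
    fix h g l
    have Unz: "U k \<noteq> (\<lambda>_. 0)" for k using timelike_nz U[of k] by blast
    have "\<rho> (h + k) x = \<rho> h (cline (U k))" for k
      using hom[OF v vnz, of h k] U[of k] xv by simp
    hence "\<omega> (h + g) (h + l) = Cart (\<rho> h (cline (U g))) (\<rho> h (cline (U l))) (\<rho> h (cline y0))"
      unfolding \<omega>_def using yfix[of h] yy by simp
    also have "\<dots> = Cart (cline (U g)) (cline (U l)) (cline y0)"
      using U y0 Unz by (intro Cart_PU[OF PU]) auto
    also have "\<dots> = \<omega> g l" unfolding \<omega>_def using U yy by simp
    finally show "\<omega> (h + g) (h + l) = \<omega> g l" .
  qed
  have cob: "coboundary1 \<omega> = (\<lambda>g1 g2 g3. Cart (\<rho> g1 x) (\<rho> g2 x) (\<rho> g3 x))"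
  proof (intro ext)
    fix g1 g2 g3
    have "Cart (\<rho> g1 x) (\<rho> g2 x) (\<rho> g3 x) = Arg (B (p g1) (p g2) * B (p g2) (p g3) * B (p g3) (p g1))"
      unfolding Cart_def p_def ..
    thus "coboundary1 \<omega> g1 g2 g3 = Cart (\<rho> g1 x) (\<rho> g2 x) (\<rho> g3 x)"
      unfolding coboundary1_def \<omega>
      using cocycle_vec[OF pv pv pv Yv pt pt pt Yt Ynz] by simp
  qed
  show ?thesis using alt inv cob by blast
qed

end
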